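(* For every share function $\rho$, the modified $\rho$-blame $\mathbf{MB}^\rho$ is an unbiased, derivative-dependent importance value function. If moreover there is $0\le\lambda<1$ such that $\rho(k)=\lambda^k$ for all integers $k\ge1$, then $\mathbf{MB}^\rho$ is chain-rule decomposable.
   Context: $X$ is a fixed finite set of $n=|X|$ variables. An assignment over $U\subseteq X$ is a map $\mathbf u:U\to\{0,1\}$; $\mathbf u;\mathbf v$ is concatenation of assignments with disjoint domains, $\mathbf u_S$ is restriction. For $S\subseteq X$ and $\mathbf u$ over $X$, $\mathbf u^{\oplus S}$ flips the values of the variables in $S$. $\mathbb B(X)$ is the set of Boolean functions $\{0,1\}^X\to\{0,1\}$, combined pointwise by $\lor,\land$ (juxtaposition), $\oplus$, negation $\overline f$; a variable $x$ also denotes $\mathbf u\mapsto\mathbf u(x)$; $f\ge g$ is pointwise. Cofactor: $f_{\mathbf v}(\mathbf u)=f(\mathbf v;\mathbf u_{X\setminus V})$ for $\mathbf v$ over $V$; $f_{x/c}$ for $V=\{x\}$. $\mathrm{dep}(f)=\{x: f_{x/1}\ne f_{x/0}\}$; $f$ is monotone in $x$ if $f_{x/1}\ge f_{x/0}$. $f^{\oplus y}(\mathbf u)=f(\mathbf u^{\oplus\{y\}})$. For a permutation $\sigma$ of $X$: $(\sigma\mathbf u)(x)=\mathbf u(\sigma^{-1}(x))$, $(\sigma f)(\mathbf u)=f(\sigma^{-1}\mathbf u)$. $f[x/s]=s f_{x/1}\lor\overline s f_{x/0}$; $\mathrm D_xf=f_{x/1}\oplus f_{x/0}$. Modularity: $f$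 is modular in $g$ if $g$ is not constant and there are $\ell\in\mathbb B(X)$, $z\in X$ with $\mathrm{dep}(\ell)\cap\mathrm{dep}(g)=\emptyset$ and $f=\ell[z/g]$; monotonically modular if moreover $\ell$ is monotone in $z$. Then $f_{g/1}:=\ell_{z/1}$, $f_{g/0}:=\ell_{z/0}$ (well defined), and for a variable $w$, $f[g/w]:=w f_{g/1}\lor\overline w f_{g/0}$. A value function is a map $\mathfrak I:X\times\mathbb B(X)\to\mathbb R$, $(x,f)\mapsto\mathfrak I_x(f)$. It is an importance value function (IVF) if for all $x,y\in X$, permutations $\sigma$ of $X$ and $f,g,h\in\mathbb B(X)$: (Bound) $0\le\mathfrak I_x(f)\le1$; (Dum) $\mathfrak I_x(f)=0$ if $x\notin\mathrm{dep}(f)$; (Dic) $\mathfrak I_x(x)=\mathfrak I_x(\overline x)=1$; (Type) $\mathfrak I_x(f)=\mathfrak I_{\sigma(x)}(\sigma f)$ and $\mathfrak I_x(f)=\mathfrak I_x(f^{\oplus y})$; (ModEC) $\mathfrak I_x(f)\ge\mathfrak I_x(h)$ whenever $f$ and $h$ are monotonically modular in $g$, $f_{g/1}\ge h_{g/1}$, $h_{g/0}\ge f_{g/0}$, and $x\in\mathrm{dep}(g)$. $\mathfrak I$ is unbiased if $\mathfrak I_x(g)=\mathfrak I_x(\overline g)$ for all $x,g$. It is derivative dependent if $\mathrm D_xf\ge\mathrm D_xg\Rightarrow\mathfrak I_x(f)\ge\mathfrak I_x(g)$ for all $f,g,x$; chain-rule decomposable if for all $f$ modular in $g$ and $x\in\mathrm{dep}(g)$: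 $\mathfrak I_x(f)=\mathfrak I_x(g)\,\mathfrak I_g(f)$, where $\mathfrak I_g(f):=\mathfrak I_{x_g}(f[g/x_g])$ for a variable $x_g\notin\mathrm{dep}(f)$. A share function is $\rho:\mathbb N\cup\{\infty\}\to\mathbb R$, monotonically decreasing, with $\rho(\infty)=\lim_{k\to\infty}\rho(k)=0$ and $\rho(0)=1$. For $f$, $x$ and $\mathbf u$ over $X$, $\mathrm{mscs}^{\mathbf u}_x(f)$ is the minimum size of a set $S\subseteq X\setminus\{x\}$ with $f(\mathbf u^{\oplus S})\ne f(\mathbf u^{\oplus(S\cup\{x\})})$ ($\infty$ if none exists). The modified $\rho$-blame is $\mathbf{MB}^\rho_x(f)=\mathbb E_{\mathbf u\in\{0,1\}^X}[\rho(\mathrm{mscs}^{\mathbf u}_x(f))]$ under the uniform distribution. *)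

theory Defs
  imports Complex_Main "HOL-Library.Extended_Nat"
begin

text \<open>The fixed finite variable set X is the universe of a finite type 'x.
  An assignment over X is a map 'x => bool; a Boolean function is a map
  ('x => bool) => bool.\<close>

type_synonym 'x assign = "'x \<Rightarrow> bool"
type_synonym 'x bf = "'x assign \<Rightarrow> bool"

definition flip :: "'x set \<Rightarrow> 'x assign \<Rightarrow> 'x assign" where
  "flip S u = (\<lambda>y. if y \<in> S then \<not> u y else u y)"

definition var :: "'x \<Rightarrow> 'x bf" where
  "var x = (\<lambda>u. u x)"

definition neg :: "'x bf \<Rightarrow> 'x bf" where
  "neg f = (\<lambda>u. \<not> f u)"

definition is_const :: "'x bf \<Rightarrow> bool" where
  "is_const g \<longleftrightarrow> g = (\<lambda>_. True) \<or> g = (\<lambda>_. False)"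

definition cof :: "'x \<Rightarrow> bool \<Rightarrow> 'x bf \<Rightarrow> 'x bf" where
  "cof x c f = (\<lambda>u. f (u(x := c)))"

definition dep :: "'x bf \<Rightarrow> 'x set" where
  "dep f = {x. cof x True f \<noteq> cof x False f}"

definition mono_in :: "'x bf \<Rightarrow> 'x \<Rightarrow> bool" where
  "mono_in f x \<longleftrightarrow> (\<forall>u. cof x False f u \<longrightarrow> cof x True f u)"

definition flip_var :: "'x bf \<Rightarrow> 'x \<Rightarrow> 'x bf" where
  "flip_var f y = (\<lambda>u. f (flip {y} u))"

definition perm_assign :: "('x \<Rightarrow> 'x) \<Rightarrow> 'x assign \<Rightarrow> 'x assign" where
  "perm_assign \<sigma> u = (\<lambda>x. u (inv \<sigma> x))"

definition perm_bf :: "('x \<Rightarrow> 'x) \<Rightarrow> 'x bf \<Rightarrow> 'x bf" where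
  "perm_bf \<sigma> f = (\<lambda>u. f (perm_assign (inv \<sigma>) u))"

definition subst :: "'x bf \<Rightarrow> 'x \<Rightarrow> 'x bf \<Rightarrow> 'x bf" where
  "subst f x s = (\<lambda>u. (s u \<and> cof x True f u) \<or> (\<not> s u \<and> cof x False f u))"

definition bderiv :: "'x \<Rightarrow> 'x bf \<Rightarrow> 'x bf" where
  "bderiv x f = (\<lambda>u. cof x True f u \<noteq> cof x False f u)"

definition modular_wit :: "'x bf \<Rightarrow> 'x bf \<Rightarrow> 'x bf \<Rightarrow> 'x \<Rightarrow> bool" where
  "modular_wit f g l z \<longleftrightarrow> dep l \<inter> dep g = {} \<and> f = subst l z g"

definition modular :: "'x bf \<Rightarrow> 'x bf \<Rightarrow> bool" where
  "modular f g \<longleftrightarrow> \<not> is_const g \<and> (\<exists>l z. modular_wit f g l z)"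

definition mono_modular :: "'x bf \<Rightarrow> 'x bf \<Rightarrow> bool" where
  "mono_modular f g \<longleftrightarrow> \<not> is_const g \<and> (\<exists>l z. modular_wit f g l z \<and> mono_in l z)"

text \<open>f_{g/1} := l_{z/1}, f_{g/0} := l_{z/0} for some witness (l, z) of modularity
  (well defined according to the paper).\<close>
definition gcof :: "'x bf \<Rightarrow> 'x bf \<Rightarrow> bool \<Rightarrow> 'x bf" where
  "gcof f g c = (let (l, z) = (SOME (l, z). modular_wit f g l z) in cof z c l)"

definition gsubst :: "'x bf \<Rightarrow> 'x bf \<Rightarrow> 'x \<Rightarrow> 'x bf" where
  "gsubst f g w = (\<lambda>u. (u w \<and> gcof f g True u) \<or> (\<not> u w \<and> gcof f g False u))"

type_synonym 'x value_fun = "'x \<Rightarrow> 'x bf \<Rightarrow> real"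

definition IVF :: "('x::finite) value_fun \<Rightarrow> bool" where
  "IVF I \<longleftrightarrow>
     (\<forall>x f. 0 \<le> I x f \<and> I x f \<le> 1) \<and>
     (\<forall>x f. x \<notin> dep f \<longrightarrow> I x f = 0) \<and>
     (\<forall>x. I x (var x) = 1 \<and> I x (neg (var x)) = 1) \<and>
     (\<forall>x \<sigma> f. bij \<sigma> \<longrightarrow> I x f = I (\<sigma> x) (perm_bf \<sigma> f)) \<and>
     (\<forall>x y f. I x f = I x (flip_var f y)) \<and>
     (\<forall>x f g h. mono_modular f g \<and> mono_modular h g \<and>
        (\<forall>u. gcof h g True u \<longrightarrow> gcof f g True u) \<and>
        (\<forall>u. gcof f g False u \<longrightarrow> gcof h g False u) \<and>
        x \<in> dep g \<longrightarrow> I x f \<ge> I x h)"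

definition unbiased :: "'x value_fun \<Rightarrow> bool" where
  "unbiased I \<longleftrightarrow> (\<forall>x g. I x g = I x (neg g))"

definition derivative_dependent :: "'x value_fun \<Rightarrow> bool" where
  "derivative_dependent I \<longleftrightarrow>
     (\<forall>f g x. (\<forall>u. bderiv x g u \<longrightarrow> bderiv x f u) \<longrightarrow> I x f \<ge> I x g)"

text \<open>Chain rule: I_g(f) := I_{x_g}(f[g/x_g]) for a variable x_g not in dep f
  (the equation is required for every such variable).\<close>
definition chain_rule_decomposable :: "'x value_fun \<Rightarrow> bool" where
  "chain_rule_decomposable I \<longleftrightarrow>
     (\<forall>f g x xg. modular f g \<and> x \<in> dep g \<and> xg \<notin> dep f \<longrightarrow>
        I x f = I x g * I xg (gsubst f g xg))"

definition share_function :: "(enat \<Rightarrow> real) \<Rightarrow> bool" where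
  "share_function \<rho> \<longleftrightarrow>
     (\<forall>a b. a \<le> b \<longrightarrow> \<rho> b \<le> \<rho> a) \<and>
     \<rho> \<infinity> = 0 \<and> (\<lambda>k. \<rho> (enat k)) \<longlonglongrightarrow> 0 \<and> \<rho> 0 = 1"

text \<open>Minimum size of a critical set (Inf of the empty set of enat is infinity).\<close>
definition mscs :: "'x assign \<Rightarrow> 'x \<Rightarrow> 'x bf \<Rightarrow> enat" where
  "mscs u x f = Inf {enat (card S) | S. S \<subseteq> - {x} \<and> f (flip S u) \<noteq> f (flip (insert x S) u)}"

definition MB :: "(enat \<Rightarrow> real) \<Rightarrow> ('x::finite) value_fun" where
  "MB \<rho> x f = (\<Sum>u\<in>(UNIV :: 'x assign set). \<rho> (mscs u x f)) / real (card (UNIV :: 'x assign set))"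

end

theory Submission
  imports Defs
begin


lemma flip_app: "flip S u y = (if y \<in> S then \<not> u y else u y)"
  by (simp add: flip_def)

lemma flip_comm: "flip A (flip B u) = flip B (flip A u)"
  by (auto simp: flip_def fun_eq_iff)

lemma flip_flip: "flip A (flip A u) = u"
  by (auto simp: flip_def fun_eq_iff)

lemma flip_insert: "x \<notin> S \<Longrightarrow> flip (insert x S) u = flip {x} (flip S u)"
  by (auto simp: flip_def fun_eq_iff)

lemma flip_empty[simp]: "flip {} u = u"
  by (simp add: flip_def)

lemma dep_iff: "y \<in> dep h \<longleftrightarrow> (\<exists>u. h (u(y:=True)) \<noteq> h (u(y:=False)))"
  by (auto simp: dep_def cof_def fun_eq_iff)

lemma support_aux:
  fixes g :: "('x::finite) bf"
  shows "finite D \<Longrightarrow> (\<forall>y. y \<notin> D \<longrightarrow> u y = v y) \<Longrightarrow> D \<inter> dep g = {} \<Longrightarrow> g u = g v"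
proof (induction D arbitrary: u rule: finite_induct)
  case empty
  then have "u = v" by auto
  then show ?case by simp
next
  case (insert y D)
  let ?u = "u(y := v y)"
  have "g ?u = g v"
  proof (rule insert.IH)
    show "\<forall>z. z \<notin> D \<longrightarrow> ?u z = v z" using insert.prems(1) by auto
    show "D \<inter> dep g = {}" using insert.prems(2) by auto
  qed
  moreover have "g u = g ?u"
  proof -
    have ny: "y \<notin> dep g" using insert.prems(2) by auto
    then have "g (u(y:=True)) = g (u(y:=False))" using dep_iff by metis
    have all: "\<And>a. g (u(y:=a)) = g (u(y:=False))"
    proof -
      fix a show "g (u(y:=a)) = g (u(y:=False))" using \<open>g (u(y:=True)) = g (u(y:=False))\<close> by (cases a) simp_all
    qed
    have "g u = g (u(y := u y))" by simp
    also have "\<dots> = g (u(y:=False))" by (rule all)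
    also have "\<dots> = g ?u" by (rule all[symmetric])
    finally show ?thesis .
  qed
  ultimately show ?case by simp
qed

lemma support:
  fixes g :: "('x::finite) bf"
  assumes "\<forall>y\<in>dep g. u y = v y"
  shows "g u = g v"
proof (rule support_aux[of "{y. u y \<noteq> v y}" u v g])
  show "finite {y. u y \<noteq> v y}" by simp
  show "\<forall>y. y \<notin> {y. u y \<noteq> v y} \<longrightarrow> u y = v y" by simp
  show "{y. u y \<noteq> v y} \<inter> dep g = {}" using assms by blast
qed

lemma dep_subI:
  assumes "\<And>u v. (\<forall>y\<in>A. u y = v y) \<Longrightarrow> h u = h v"
  shows "dep h \<subseteq> A"
proof
  fix y assume "y \<in> dep h"
  then obtain u where u: "h (u(y:=True)) \<noteq> h (u(y:=False))" using dep_iff by metis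
  show "y \<in> A"
  proof (rule ccontr)
    assume "y \<notin> A"
    then have "\<forall>z\<in>A. (u(y:=True)) z = (u(y:=False)) z" by auto
    then show False using assms u by blast
  qed
qed

lemma dep_cof:
  fixes l :: "('x::finite) bf"
  shows "dep (cof z c l) \<subseteq> dep l - {z}"
proof (rule dep_subI)
  fix u v :: "'x assign" assume a: "\<forall>y\<in>dep l - {z}. u y = v y"
  have "l (u(z:=c)) = l (v(z:=c))" by (rule support[of l]) (use a in auto)
  then show "cof z c l u = cof z c l v" by (simp add: cof_def)
qed

definition crit :: "'x bf \<Rightarrow> 'x set \<Rightarrow> 'x assign \<Rightarrow> enat" where
  "crit P C u = Inf {enat (card S) | S. S \<subseteq> C \<and> P (flip S u)}"

definition piv :: "'x \<Rightarrow> 'x bf \<Rightarrow> 'x bf" where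
  "piv x f v = (f v \<noteq> f (flip {x} v))"

lemma mscs_crit: "mscs u x f = crit (piv x f) (-{x}) u"
proof -
  have fi: "\<And>S. S \<subseteq> -{x} \<Longrightarrow> flip (insert x S) u = flip {x} (flip S u)"
    by (rule flip_insert) blast
  have eq: "\<And>S. (S \<subseteq> - {x} \<and> f (flip S u) \<noteq> f (flip (insert x S) u)) = (S \<subseteq> - {x} \<and> piv x f (flip S u))"
  proof -
    fix S show "(S \<subseteq> - {x} \<and> f (flip S u) \<noteq> f (flip (insert x S) u)) = (S \<subseteq> - {x} \<and> piv x f (flip S u))"
      using fi[of S] unfolding piv_def by metis
  qed
  show ?thesis unfolding mscs_def crit_def by (simp only: eq)
qed

lemma crit_mono: "(\<And>v. P' v \<Longrightarrow> P v) \<Longrightarrow> crit P C u \<le> crit P' C u"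
  unfolding crit_def by (rule Inf_superset_mono) blast

lemma crit_empty: "(\<And>v. \<not> P v) \<Longrightarrow> crit P C u = \<infinity>"
  unfolding crit_def by (simp add: Inf_enat_def)

lemma crit_attain:
  assumes "crit P C u \<noteq> \<infinity>"
  shows "\<exists>S. S \<subseteq> C \<and> P (flip S u) \<and> crit P C u = enat (card S)"
proof -
  let ?A = "{enat (card S) | S. S \<subseteq> C \<and> P (flip S u)}"
  have ne: "?A \<noteq> {}"
  proof
    assume "?A = {}"
    then have "crit P C u = \<infinity>" unfolding crit_def by (metis Inf_empty top_enat_def)
    then show False using assms by simp
  qed
  have ex: "\<exists>e. e \<in> ?A" using ne by blast
  have "(LEAST e. e \<in> ?A) \<in> ?A" by (rule LeastI_ex[OF ex])
  moreover have "Inf ?A = (LEAST e. e \<in> ?A)" unfolding Inf_enat_def using ne by (rule if_not_P)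
  ultimately have "crit P C u \<in> ?A" unfolding crit_def by simp
  then show ?thesis by blast
qed

lemma crit_le: "S \<subseteq> C \<Longrightarrow> P (flip S u) \<Longrightarrow> crit P C u \<le> enat (card S)"
  unfolding crit_def by (rule Inf_lower) blast

lemma crit_zero: "P u \<Longrightarrow> crit P C u = 0"
proof -
  assume "P u"
  then have "crit P C u \<le> 0" using crit_le[of "{}" C P u] by (simp add: zero_enat_def)
  then show ?thesis by simp
qed

lemma crit_geI: "(\<And>S. S \<subseteq> C \<Longrightarrow> P (flip S u) \<Longrightarrow> e \<le> enat (card S)) \<Longrightarrow> e \<le> crit P C u"
  unfolding crit_def by (rule Inf_greatest) blast

lemma flip_agree: "(\<forall>y\<in>D. (y \<in> S) = (y \<in> T)) \<Longrightarrow> \<forall>y\<in>D. flip S u y = flip T u y"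
  by (auto simp: flip_def)

lemma crit_restrict:
  fixes P :: "('x::finite) bf"
  shows "crit P C u = crit P (C \<inter> dep P) u"
proof (rule antisym)
  show "crit P C u \<le> crit P (C \<inter> dep P) u"
    unfolding crit_def by (rule Inf_superset_mono) blast
  show "crit P (C \<inter> dep P) u \<le> crit P C u"
  proof (rule crit_geI)
    fix S assume S: "S \<subseteq> C" "P (flip S u)"
    have "P (flip (S \<inter> dep P) u) = P (flip S u)"
      by (rule support[of P]) (auto simp: flip_def)
    then have "crit P (C \<inter> dep P) u \<le> enat (card (S \<inter> dep P))"
      using S by (intro crit_le) auto
    also have "\<dots> \<le> enat (card S)" by (simp add: card_mono)
    finally show "crit P (C \<inter> dep P) u \<le> enat (card S)" .
  qed
qed

lemma crit_local:
  fixes P :: "('x::finite) bf"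
  assumes "\<forall>y\<in>dep P. u y = u' y"
  shows "crit P C u = crit P C u'"
proof -
  have "\<And>S. P (flip S u) = P (flip S u')"
    by (rule support[of P]) (use assms in \<open>auto simp: flip_def\<close>)
  then show ?thesis unfolding crit_def by simp
qed

lemma crit_and:
  fixes P Q :: "('x::finite) bf"
  assumes disj: "dep P \<inter> dep Q = {}"
  shows "crit (\<lambda>v. P v \<and> Q v) C u = crit P C u + crit Q C u"
proof (rule antisym)
  show "crit P C u + crit Q C u \<le> crit (\<lambda>v. P v \<and> Q v) C u"
  proof (rule crit_geI)
    fix S assume S: "S \<subseteq> C" "P (flip S u) \<and> Q (flip S u)"
    have "P (flip (S \<inter> dep P) u) = P (flip S u)"
      by (rule support[of P]) (auto simp: flip_def)
    then have "crit P (C \<inter> dep P) u \<le> enat (card (S \<inter> dep P))"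
      using S by (intro crit_le) auto
    then have 1: "crit P C u \<le> enat (card (S \<inter> dep P))" using crit_restrict by metis
    have "Q (flip (S \<inter> dep Q) u) = Q (flip S u)"
      by (rule support[of Q]) (auto simp: flip_def)
    then have "crit Q (C \<inter> dep Q) u \<le> enat (card (S \<inter> dep Q))"
      using S by (intro crit_le) auto
    then have 2: "crit Q C u \<le> enat (card (S \<inter> dep Q))" using crit_restrict by metis
    have "card (S \<inter> dep P) + card (S \<inter> dep Q) = card ((S \<inter> dep P) \<union> (S \<inter> dep Q))"
      using disj by (intro card_Un_disjoint[symmetric]) auto
    also have "\<dots> \<le> card S" by (rule card_mono) auto
    finally have 3: "card (S \<inter> dep P) + card (S \<inter> dep Q) \<le> card S" .
    have "crit P C u + crit Q C u \<le> enat (card (S \<inter> dep P)) + enat (card (S \<inter> dep Q))"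
      using 1 2 by (rule add_mono)
    also have "\<dots> \<le> enat (card S)" using 3 by simp
    finally show "crit P C u + crit Q C u \<le> enat (card S)" .
  qed
next
  show "crit (\<lambda>v. P v \<and> Q v) C u \<le> crit P C u + crit Q C u"
  proof (cases "crit P C u = \<infinity> \<or> crit Q C u = \<infinity>")
    case True then show ?thesis by auto
  next
    case False
    then have f1: "crit P (C \<inter> dep P) u \<noteq> \<infinity>" and f2: "crit Q (C \<inter> dep Q) u \<noteq> \<infinity>"
      using crit_restrict by metis+
    obtain S1 where S1: "S1 \<subseteq> C \<inter> dep P" "P (flip S1 u)" "crit P (C \<inter> dep P) u = enat (card S1)"
      using crit_attain[OF f1] by blast
    obtain S2 where S2: "S2 \<subseteq> C \<inter> dep Q" "Q (flip S2 u)" "crit Q (C \<inter> dep Q) u = enat (card S2)"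
      using crit_attain[OF f2] by blast
    have "P (flip (S1 \<union> S2) u) = P (flip S1 u)"
      by (rule support[of P]) (use S1 S2 disj in \<open>auto simp: flip_def\<close>)
    moreover have "Q (flip (S1 \<union> S2) u) = Q (flip S2 u)"
      by (rule support[of Q]) (use S1 S2 disj in \<open>auto simp: flip_def\<close>)
    ultimately have "crit (\<lambda>v. P v \<and> Q v) C u \<le> enat (card (S1 \<union> S2))"
      using S1 S2 by (intro crit_le) auto
    also have "card (S1 \<union> S2) = card S1 + card S2"
      using S1 S2 disj by (intro card_Un_disjoint) auto
    finally show ?thesis using S1 S2 crit_restrict by (metis plus_enat_simps(1))
  qed
qed



lemma card_assign_pos: "0 < card (UNIV :: ('x::finite) assign set)"
  by (simp add: card_gt_0_iff)

lemma MB_crit: "MB \<rho> x (f :: ('x::finite) bf) =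
   (\<Sum>u\<in>UNIV. \<rho> (crit (piv x f) (-{x}) u)) / real (card (UNIV :: 'x assign set))"
  by (simp add: MB_def mscs_crit)

lemma rho_bounds: "share_function \<rho> \<Longrightarrow> 0 \<le> \<rho> e \<and> \<rho> e \<le> 1"
  unfolding share_function_def by (metis enat_ord_code(3) zero_le)

lemma MB_mono:
  fixes f h :: "('x::finite) bf"
  assumes sf: "share_function \<rho>" and imp: "\<And>v. piv x h v \<Longrightarrow> piv x f v"
  shows "MB \<rho> x h \<le> MB \<rho> x f"
proof -
  have "\<And>u. \<rho> (crit (piv x h) (-{x}) u) \<le> \<rho> (crit (piv x f) (-{x}) u)"
    using sf crit_mono[of "piv x h" "piv x f", OF imp] unfolding share_function_def by blast
  then have "(\<Sum>u\<in>UNIV. \<rho> (crit (piv x h) (-{x}) u)) \<le> (\<Sum>u\<in>UNIV. \<rho> (crit (piv x f) (-{x}) u))"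
    by (rule sum_mono)
  then show ?thesis unfolding MB_crit by (rule divide_right_mono) simp
qed

lemma MB_bounds:
  fixes f :: "('x::finite) bf"
  assumes sf: "share_function \<rho>"
  shows "0 \<le> MB \<rho> x f \<and> MB \<rho> x f \<le> 1"
proof -
  let ?N = "real (card (UNIV :: 'x assign set))"
  have N: "?N > 0" using card_assign_pos by simp
  have "(\<Sum>u\<in>UNIV. \<rho> (crit (piv x f) (-{x}) u)) \<le> (\<Sum>u\<in>(UNIV::'x assign set). 1)"
    by (rule sum_mono) (use rho_bounds[OF sf] in auto)
  then have 1: "(\<Sum>u\<in>UNIV. \<rho> (crit (piv x f) (-{x}) u)) \<le> ?N" by simp
  have 0: "0 \<le> (\<Sum>u\<in>UNIV. \<rho> (crit (piv x f) (-{x}) u))"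
    by (rule sum_nonneg) (use rho_bounds[OF sf] in auto)
  show ?thesis unfolding MB_crit using 0 1 N by (simp add: divide_le_eq_1)
qed

lemma MB_const:
  fixes f :: "('x::finite) bf"
  assumes "\<And>u. \<rho> (crit (piv x f) (-{x}) u) = c"
  shows "MB \<rho> x f = c"
  unfolding MB_crit assms using card_assign_pos[where 'x='x] by simp

lemma dep_piv: "dep (piv x (g::('x::finite) bf)) \<subseteq> dep g"
proof (rule dep_subI)
  fix u v :: "'x assign" assume a: "\<forall>y\<in>dep g. u y = v y"
  have "g u = g v" by (rule support[of g]) (use a in auto)
  moreover have "g (flip {x} u) = g (flip {x} v)" by (rule support[of g]) (use a in \<open>auto simp: flip_def\<close>)
  ultimately show "piv x g u = piv x g v" by (simp add: piv_def)
qed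

lemma piv_nodep:
  assumes "x \<notin> dep (f::('x::finite) bf)" shows "\<not> piv x f v"
proof -
  have "\<forall>y\<in>dep f. v y = flip {x} v y" using assms by (auto simp: flip_def)
  from support[OF this] show ?thesis by (simp add: piv_def)
qed

lemma piv_var: "piv x (var x) v" "piv x (neg (var x)) v"
  by (auto simp: piv_def var_def neg_def flip_def)

lemma piv_neg: "piv x (neg g) = piv x g"
  by (auto simp: piv_def neg_def fun_eq_iff)

lemma piv_bderiv: "piv x g v = bderiv x g v"
proof -
  show ?thesis
  proof (cases "v x")
    case True
    then have "v(x:=True) = v" "v(x:=False) = flip {x} v" by (auto simp: flip_def fun_eq_iff)
    then show ?thesis by (auto simp: piv_def bderiv_def cof_def)
  next
    case False
    then have "v(x:=False) = v" "v(x:=True) = flip {x} v" by (auto simp: flip_def fun_eq_iff)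
    then show ?thesis by (auto simp: piv_def bderiv_def cof_def)
  qed
qed

lemma piv_flipvar: "piv x (flip_var f y) v = piv x f (flip {y} v)"
  by (simp add: piv_def flip_var_def flip_comm)

lemma crit_flipvar: "crit (\<lambda>v. P (flip {y} v)) C u = crit P C (flip {y} u)"
  by (simp add: crit_def flip_comm)

lemma sum_flip: "(\<Sum>u\<in>UNIV. h (flip A u)) = (\<Sum>u\<in>(UNIV::('x::finite) assign set). h u)"
  by (rule sum.reindex_bij_witness[where i="flip A" and j="flip A"]) (auto simp: flip_flip)

lemma perm_bf_eq: "bij \<sigma> \<Longrightarrow> perm_bf \<sigma> f v = f (v \<circ> \<sigma>)"
  by (simp add: perm_bf_def perm_assign_def inv_inv_eq comp_def)

lemma piv_perm:
  assumes "bij \<sigma>"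
  shows "piv (\<sigma> x) (perm_bf \<sigma> f) v = piv x f (v \<circ> \<sigma>)"
proof -
  have "flip {\<sigma> x} v \<circ> \<sigma> = flip {x} (v \<circ> \<sigma>)"
    using bij_is_inj[OF assms] by (auto simp: flip_def fun_eq_iff inj_eq)
  then show ?thesis using assms by (simp add: piv_def perm_bf_eq)
qed

lemma crit_perm:
  assumes b: "bij \<sigma>"
  shows "crit (\<lambda>v. P (v \<circ> \<sigma>)) C u = crit P (\<sigma> -` C) (u \<circ> \<sigma>)"
proof -
  have inj: "inj \<sigma>" using b bij_is_inj by blast
  have fl: "\<And>S. flip S u \<circ> \<sigma> = flip (\<sigma> -` S) (u \<circ> \<sigma>)"
    by (auto simp: flip_def fun_eq_iff)
  have "{enat (card S) | S. S \<subseteq> C \<and> P (flip S u \<circ> \<sigma>)}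
      = {enat (card T) | T. T \<subseteq> \<sigma> -` C \<and> P (flip T (u \<circ> \<sigma>))}"
  proof (intro equalityI subsetI)
    fix e assume "e \<in> {enat (card S) | S. S \<subseteq> C \<and> P (flip S u \<circ> \<sigma>)}"
    then obtain S where S: "e = enat (card S)" "S \<subseteq> C" "P (flip S u \<circ> \<sigma>)" by blast
    have "\<sigma> ` (\<sigma> -` S) = S" using b by (simp add: bij_is_surj surj_image_vimage_eq)
    then have "card (\<sigma> -` S) = card S" using inj by (metis card_image inj_on_subset subset_UNIV)
    moreover have "\<sigma> -` S \<subseteq> \<sigma> -` C" using S by auto
    moreover have "P (flip (\<sigma> -` S) (u \<circ> \<sigma>))" using S(3) fl[of S] by simp
    ultimately show "e \<in> {enat (card T) | T. T \<subseteq> \<sigma> -` C \<and> P (flip T (u \<circ> \<sigma>))}"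
      using S(1) by (intro CollectI exI[of _ "\<sigma> -` S"]) simp
  next
    fix e assume "e \<in> {enat (card T) | T. T \<subseteq> \<sigma> -` C \<and> P (flip T (u \<circ> \<sigma>))}"
    then obtain T where T: "e = enat (card T)" "T \<subseteq> \<sigma> -` C" "P (flip T (u \<circ> \<sigma>))" by blast
    have v: "\<sigma> -` (\<sigma> ` T) = T" using inj by (simp add: inj_vimage_image_eq)
    have c: "card (\<sigma> ` T) = card T" using inj by (metis card_image inj_on_subset subset_UNIV)
    have "\<sigma> ` T \<subseteq> C" using T by auto
    moreover have "P (flip (\<sigma> ` T) u \<circ> \<sigma>)" using T(3) fl[of "\<sigma> ` T"] v by simp
    ultimately show "e \<in> {enat (card S) | S. S \<subseteq> C \<and> P (flip S u \<circ> \<sigma>)}"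
      using T(1) c by (intro CollectI exI[of _ "\<sigma> ` T"]) simp
  qed
  then show ?thesis by (simp add: crit_def)
qed

lemma MB_perm:
  fixes f :: "('x::finite) bf"
  assumes b: "bij \<sigma>"
  shows "MB \<rho> x f = MB \<rho> (\<sigma> x) (perm_bf \<sigma> f)"
proof -
  have pv: "\<sigma> -` (-{\<sigma> x}) = -{x}" using bij_is_inj[OF b] by (auto simp: inj_eq)
  have cr: "\<And>u. crit (piv (\<sigma> x) (perm_bf \<sigma> f)) (-{\<sigma> x}) u = crit (piv x f) (-{x}) (u \<circ> \<sigma>)"
  proof -
    fix u
    have "piv (\<sigma> x) (perm_bf \<sigma> f) = (\<lambda>v. piv x f (v \<circ> \<sigma>))" using piv_perm[OF b] by auto
    then show "crit (piv (\<sigma> x) (perm_bf \<sigma> f)) (-{\<sigma> x}) u = crit (piv x f) (-{x}) (u \<circ> \<sigma>)"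
      using crit_perm[OF b, of "piv x f" "-{\<sigma> x}" u] pv by simp
  qed
  have s1: "\<sigma> \<circ> inv \<sigma> = id" using surj_iff[THEN iffD1, OF bij_is_surj[OF b]] .
  have s2: "inv \<sigma> \<circ> \<sigma> = id" using inj_iff[THEN iffD1, OF bij_is_inj[OF b]] .
  have sm: "(\<Sum>u\<in>UNIV. \<rho> (crit (piv x f) (-{x}) (u \<circ> \<sigma>))) = (\<Sum>u\<in>(UNIV::'x assign set). \<rho> (crit (piv x f) (-{x}) u))"
    by (rule sum.reindex_bij_witness[where i="\<lambda>u. u \<circ> inv \<sigma>" and j="\<lambda>u. u \<circ> \<sigma>"])
       (auto simp: comp_assoc s1 s2)
  show ?thesis unfolding MB_crit using cr sm by simp
qed

lemma MB_flip:
  fixes f :: "('x::finite) bf"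
  shows "MB \<rho> x f = MB \<rho> x (flip_var f y)"
proof -
  have "\<And>u. crit (piv x (flip_var f y)) (-{x}) u = crit (piv x f) (-{x}) (flip {y} u)"
    using crit_flipvar[of "piv x f" y] by (simp add: piv_flipvar[abs_def])
  then show ?thesis unfolding MB_crit
    using sum_flip[of "\<lambda>u. \<rho> (crit (piv x f) (-{x}) u)" "{y}"] by simp
qed



lemma nonconst_ex:
  assumes "\<not> is_const g" shows "\<exists>w. g w = c"
proof (cases c)
  case True
  then show ?thesis using assms unfolding is_const_def by (metis (full_types))
next
  case False
  then show ?thesis using assms unfolding is_const_def by (metis (full_types))
qed

lemma subst_eval: "g u = c \<Longrightarrow> subst l z g u = cof z c l u"
  by (cases c) (auto simp: subst_def)

lemma wit_cof_disj:
  fixes l :: "('x::finite) bf"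
  assumes "modular_wit f g l z"
  shows "dep (cof z c l) \<inter> dep g = {}"
  using assms dep_cof[of z c l] unfolding modular_wit_def by blast

lemma wit_eval:
  fixes l :: "('x::finite) bf"
  assumes w: "modular_wit f g l z" and nc: "\<not> is_const g"
  obtains u' where "g u' = c" "f u' = cof z c l u" "\<forall>y. y \<notin> dep g \<longrightarrow> u' y = u y"
proof -
  obtain w where gw: "g w = c" using nonconst_ex[OF nc] by blast
  define u' where "u' = (\<lambda>y. if y \<in> dep g then w y else u y)"
  have "g u' = g w" by (rule support[of g]) (simp add: u'_def)
  then have g': "g u' = c" using gw by simp
  have "cof z c l u' = cof z c l u"
    by (rule support[of "cof z c l"]) (use wit_cof_disj[OF w, of c] in \<open>auto simp: u'_def\<close>)
  moreover have "f u' = cof z c l u'" using w g' by (simp add: modular_wit_def subst_eval)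
  ultimately show ?thesis using that g' by (simp add: u'_def)
qed

lemma wit_unique:
  fixes l :: "('x::finite) bf"
  assumes nc: "\<not> is_const g" and w: "modular_wit f g l z" and w': "modular_wit f g l' z'"
  shows "cof z c l = cof z' c l'"
proof
  fix u
  obtain u' where u': "g u' = c" "f u' = cof z c l u" "\<forall>y. y \<notin> dep g \<longrightarrow> u' y = u y"
    using wit_eval[OF w nc] by blast
  have "cof z' c l' u' = cof z' c l' u"
    by (rule support[of "cof z' c l'"]) (use wit_cof_disj[OF w', of c] u'(3) in blast)
  moreover have "f u' = cof z' c l' u'" using w' u'(1) by (simp add: modular_wit_def subst_eval)
  ultimately show "cof z c l u = cof z' c l' u" using u'(2) by simp
qed

lemma gcof_wit:
  fixes l :: "('x::finite) bf"
  assumes nc: "\<not> is_const g" and w: "modular_wit f g l z"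
  shows "gcof f g c = cof z c l"
proof -
  define p where "p = (SOME (l, z). modular_wit f g l z)"
  have "case (l, z) of (l, z) \<Rightarrow> modular_wit f g l z" using w by simp
  then have "case p of (l, z) \<Rightarrow> modular_wit f g l z" unfolding p_def by (rule someI)
  then have wp: "modular_wit f g (fst p) (snd p)" by (simp add: case_prod_beta)
  have "gcof f g c = cof (snd p) c (fst p)" unfolding gcof_def p_def[symmetric] by (simp add: case_prod_beta Let_def)
  also have "\<dots> = cof z c l" by (rule wit_unique[OF nc wp w])
  finally show ?thesis .
qed

lemma dep_cof_f:
  fixes l :: "('x::finite) bf"
  assumes nc: "\<not> is_const g" and w: "modular_wit f g l z"
  shows "dep (cof z c l) \<subseteq> dep f"
proof
  fix y assume y: "y \<in> dep (cof z c l)"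
  then obtain u where u: "cof z c l (u(y:=True)) \<noteq> cof z c l (u(y:=False))" using dep_iff by metis
  have yg: "y \<notin> dep g" using y wit_cof_disj[OF w, of c] by blast
  obtain w0 where gw: "g w0 = c" using nonconst_ex[OF nc] by blast
  define u' where "u' = (\<lambda>t. if t \<in> dep g then w0 t else u t)"
  have ev: "f (u'(y:=b)) = cof z c l (u(y:=b))" for b
  proof -
    have "g (u'(y:=b)) = g w0" by (rule support[of g]) (use yg in \<open>auto simp: u'_def\<close>)
    then have "f (u'(y:=b)) = cof z c l (u'(y:=b))" using w gw by (simp add: modular_wit_def subst_eval)
    also have "\<dots> = cof z c l (u(y:=b))"
      by (rule support[of "cof z c l"]) (use wit_cof_disj[OF w, of c] in \<open>auto simp: u'_def\<close>)
    finally show ?thesis .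
  qed
  have "f (u'(y:=True)) \<noteq> f (u'(y:=False))" using u ev by simp
  then show "y \<in> dep f" using dep_iff by metis
qed

lemma piv_subst:
  fixes l :: "('x::finite) bf"
  assumes w: "modular_wit f g l z" and x: "x \<in> dep g"
  shows "piv x f v = (piv x g v \<and> cof z True l v \<noteq> cof z False l v)"
proof -
  have inv: "cof z c l (flip {x} v) = cof z c l v" for c
    by (rule support[of "cof z c l"]) (use wit_cof_disj[OF w, of c] x in \<open>auto simp: flip_def\<close>)
  have f: "f = subst l z g" using w by (simp add: modular_wit_def)
  show ?thesis unfolding piv_def f subst_def using inv[of True] inv[of False] by auto
qed

lemma MB_ModEC:
  fixes f g h :: "('x::finite) bf"
  assumes sf: "share_function \<rho>" and mf: "mono_modular f g" and mh: "mono_modular h g"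
    and c1: "\<forall>u. gcof h g True u \<longrightarrow> gcof f g True u"
    and c0: "\<forall>u. gcof f g False u \<longrightarrow> gcof h g False u"
    and x: "x \<in> dep g"
  shows "MB \<rho> x h \<le> MB \<rho> x f"
proof -
  obtain l z where wf: "modular_wit f g l z" and nc: "\<not> is_const g"
    using mf unfolding mono_modular_def by blast
  obtain l' z' where wh: "modular_wit h g l' z'" and mo: "mono_in l' z'"
    using mh unfolding mono_modular_def by blast
  have gf: "gcof f g c = cof z c l" for c by (rule gcof_wit[OF nc wf])
  have gh: "gcof h g c = cof z' c l'" for c by (rule gcof_wit[OF nc wh])
  have imp: "piv x f v" if pv: "piv x h v" for v
  proof -
    have a: "piv x g v" and b: "cof z' True l' v \<noteq> cof z' False l' v"
      using piv_subst[OF wh x, of v] pv by simp_all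
    have m: "cof z' False l' v \<longrightarrow> cof z' True l' v" using mo unfolding mono_in_def by blast
    have t: "cof z' True l' v" and nf: "\<not> cof z' False l' v" using b m by blast+
    have "gcof f g True v" using c1 t gh[of True] by simp
    then have t2: "cof z True l v" using gf[of True] by simp
    have "\<not> gcof f g False v" using c0 nf gh[of False] by auto
    then have f2: "\<not> cof z False l v" using gf[of False] by simp
    show ?thesis using piv_subst[OF wf x, of v] a t2 f2 by simp
  qed
  show ?thesis by (rule MB_mono[OF sf imp])
qed

definition merge :: "'x set \<Rightarrow> 'x assign \<Rightarrow> 'x assign \<Rightarrow> 'x assign" where
  "merge A u v = (\<lambda>y. if y \<in> A then u y else v y)"

lemma sum_indep:
  fixes \<phi> \<psi> :: "('x::finite) assign \<Rightarrow> real"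
  assumes p: "\<And>u v. (\<forall>y\<in>A. u y = v y) \<Longrightarrow> \<phi> u = \<phi> v"
    and q: "\<And>u v. (\<forall>y. y \<notin> A \<longrightarrow> u y = v y) \<Longrightarrow> \<psi> u = \<psi> v"
  shows "real (card (UNIV :: 'x assign set)) * (\<Sum>u\<in>UNIV. \<phi> u * \<psi> u) = (\<Sum>u\<in>UNIV. \<phi> u) * (\<Sum>u\<in>UNIV. \<psi> u)"
proof -
  let ?U = "UNIV :: 'x assign set"
  let ?h = "\<lambda>u. \<phi> u * \<psi> u"
  have "(\<Sum>u\<in>UNIV. \<phi> u) * (\<Sum>u\<in>UNIV. \<psi> u) = (\<Sum>p\<in>?U \<times> ?U. \<phi> (fst p) * \<psi> (snd p))"
    by (simp add: sum_product sum.cartesian_product case_prod_beta)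
  also have "\<dots> = (\<Sum>p\<in>?U \<times> ?U. ?h (merge A (fst p) (snd p)))"
  proof (rule sum.cong[OF refl])
    fix p :: "'x assign \<times> 'x assign"
    have "\<phi> (merge A (fst p) (snd p)) = \<phi> (fst p)" by (rule p) (simp add: merge_def)
    moreover have "\<psi> (merge A (fst p) (snd p)) = \<psi> (snd p)" by (rule q) (simp add: merge_def)
    ultimately show "\<phi> (fst p) * \<psi> (snd p) = ?h (merge A (fst p) (snd p))" by simp
  qed
  also have "\<dots> = (\<Sum>p\<in>?U \<times> ?U. ?h (fst p))"
  proof -
    let ?T = "\<lambda>p. (merge A (fst p) (snd p), merge A (snd p) (fst p))"
    have TT: "?T (?T p) = p" for p by (auto simp: merge_def fun_eq_iff)
    show ?thesis
      by (rule sum.reindex_bij_witness[where i="?T" and j="?T"]) (use TT in auto)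
  qed
  also have "\<dots> = (\<Sum>u\<in>?U. \<Sum>v\<in>?U. ?h (fst (u, v)))"
    by (rule sum.cartesian_product')
  also have "\<dots> = real (card ?U) * (\<Sum>u\<in>?U. ?h u)"
    by (simp add: sum_distrib_left)
  finally show ?thesis by simp
qed



lemma rho_mult:
  fixes \<rho> :: "enat \<Rightarrow> real"
  assumes ri: "\<rho> \<infinity> = 0" and rk: "\<forall>k. \<rho> (enat k) = lam ^ k"
  shows "\<rho> (a + b) = \<rho> a * \<rho> b"
proof (cases a)
  case (enat m)
  then show ?thesis
  proof (cases b)
    case (enat n)
    then show ?thesis using \<open>a = enat m\<close> rk by (simp add: power_add)
  next
    case infinity
    then show ?thesis using ri by simp
  qed
next
  case infinity
  then show ?thesis using ri by simp
qed

lemma MB_chain: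
  fixes f g :: "('x::finite) bf"
  assumes ri: "\<rho> \<infinity> = 0" and rk: "\<forall>k. \<rho> (enat k) = lam ^ k"
    and md: "modular f g" and x: "x \<in> dep g" and xg: "xg \<notin> dep f"
  shows "MB \<rho> x f = MB \<rho> x g * MB \<rho> xg (gsubst f g xg)"
proof -
  obtain l z where w: "modular_wit f g l z" and nc: "\<not> is_const g"
    using md unfolding modular_def by blast
  define f1 where "f1 = cof z True l"
  define f0 where "f0 = cof z False l"
  define D where "D = (\<lambda>v. f1 v \<noteq> f0 v)"
  have gc1: "gcof f g True = f1" unfolding f1_def by (rule gcof_wit[OF nc w])
  have gc0: "gcof f g False = f0" unfolding f0_def by (rule gcof_wit[OF nc w])
  have d1: "xg \<notin> dep f1" using dep_cof_f[OF nc w, of True] xg unfolding f1_def by blast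
  have d0: "xg \<notin> dep f0" using dep_cof_f[OF nc w, of False] xg unfolding f0_def by blast
  have dD: "dep D \<subseteq> dep f1 \<union> dep f0"
  proof (rule dep_subI)
    fix u v :: "'x assign" assume a: "\<forall>y\<in>dep f1 \<union> dep f0. u y = v y"
    have "f1 u = f1 v" by (rule support[of f1]) (use a in auto)
    moreover have "f0 u = f0 v" by (rule support[of f0]) (use a in auto)
    ultimately show "D u = D v" by (simp add: D_def)
  qed
  have dg: "dep D \<inter> dep g = {}"
    using dD wit_cof_disj[OF w, of True] wit_cof_disj[OF w, of False] unfolding f1_def f0_def by blast
  have xD: "x \<notin> dep D" using dg x by blast
  have xgD: "xg \<notin> dep D" using dD d1 d0 by blast
  have disj: "dep (piv x g) \<inter> dep D = {}" using dep_piv[of x g] dg by blast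
  have pF: "piv xg (gsubst f g xg) = D"
  proof
    fix v
    have i1: "f1 (flip {xg} v) = f1 v" by (rule support[of f1]) (use d1 in \<open>auto simp: flip_def\<close>)
    have i0: "f0 (flip {xg} v) = f0 v" by (rule support[of f0]) (use d0 in \<open>auto simp: flip_def\<close>)
    have fx: "flip {xg} v xg = (\<not> v xg)" by (simp add: flip_def)
    show "piv xg (gsubst f g xg) v = D v"
      unfolding piv_def gsubst_def gc1 gc0 D_def i1 i0 fx by auto
  qed
  have pf: "piv x f = (\<lambda>v. piv x g v \<and> D v)"
    using piv_subst[OF w x] unfolding D_def f1_def f0_def by blast
  have cD: "crit D (-{x}) u = crit D (-{xg}) u" for u
  proof -
    have "crit D (-{x}) u = crit D (-{x} \<inter> dep D) u" by (rule crit_restrict)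
    also have "-{x} \<inter> dep D = -{xg} \<inter> dep D" using xD xgD by blast
    also have "crit D (-{xg} \<inter> dep D) u = crit D (-{xg}) u" by (rule crit_restrict[symmetric])
    finally show ?thesis .
  qed
  define \<phi> where "\<phi> = (\<lambda>u. \<rho> (crit (piv x g) (-{x}) u))"
  define \<psi> where "\<psi> = (\<lambda>u. \<rho> (crit D (-{xg}) u))"
  have e: "\<rho> (crit (piv x f) (-{x}) u) = \<phi> u * \<psi> u" for u
  proof -
    have "crit (piv x f) (-{x}) u = crit (piv x g) (-{x}) u + crit D (-{x}) u"
      unfolding pf by (rule crit_and[OF disj])
    then show ?thesis unfolding \<phi>_def \<psi>_def cD using rho_mult[OF ri rk] by simp
  qed
  have lp: "\<phi> u = \<phi> v" if "\<forall>y\<in>dep g. u y = v y" for u v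
    unfolding \<phi>_def using crit_local[of "piv x g" u v] dep_piv[of x g] that by (metis subsetD)
  have lq: "\<psi> u = \<psi> v" if "\<forall>y. y \<notin> dep g \<longrightarrow> u y = v y" for u v
    unfolding \<psi>_def using crit_local[of D u v] dg that by (metis disjoint_iff)
  let ?N = "real (card (UNIV :: 'x assign set))"
  have N: "?N > 0" using card_assign_pos by simp
  have ind: "?N * (\<Sum>u\<in>UNIV. \<phi> u * \<psi> u) = (\<Sum>u\<in>UNIV. \<phi> u) * (\<Sum>u\<in>UNIV. \<psi> u)"
    by (rule sum_indep[of "dep g"]) (use lp lq in blast)+
  have "MB \<rho> x f = (\<Sum>u\<in>UNIV. \<phi> u * \<psi> u) / ?N" unfolding MB_crit e ..
  also have "\<dots> = ((\<Sum>u\<in>UNIV. \<phi> u) * (\<Sum>u\<in>UNIV. \<psi> u)) / (?N * ?N)"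
    using ind N by (simp add: field_simps)
  also have "\<dots> = ((\<Sum>u\<in>UNIV. \<phi> u) / ?N) * ((\<Sum>u\<in>UNIV. \<psi> u) / ?N)" by simp
  also have "\<dots> = MB \<rho> x g * MB \<rho> xg (gsubst f g xg)"
    unfolding MB_crit \<phi>_def \<psi>_def pF ..
  finally show ?thesis .
qed

theorem mainTheorem5:
  fixes \<rho> :: "enat \<Rightarrow> real"
  assumes "share_function \<rho>"
  shows "IVF (MB \<rho> :: ('x::finite) value_fun) \<and> unbiased (MB \<rho> :: 'x value_fun)
         \<and> derivative_dependent (MB \<rho> :: 'x value_fun)
         \<and> ((\<exists>lam::real. 0 \<le> lam \<and> lam < 1 \<and> (\<forall>k::nat. k \<ge> 1 \<longrightarrow> \<rho> (enat k) = lam ^ k))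
              \<longrightarrow> chain_rule_decomposable (MB \<rho> :: 'x value_fun))"
proof (intro conjI impI)
  note sf = assms
  have r0: "\<rho> 0 = 1" and ri: "\<rho> \<infinity> = 0" using sf unfolding share_function_def by auto
  show "IVF (MB \<rho> :: 'x value_fun)"
    unfolding IVF_def
  proof (intro conjI allI impI)
    fix x :: 'x and f :: "'x bf"
    show "0 \<le> MB \<rho> x f" "MB \<rho> x f \<le> 1" using MB_bounds[OF sf] by auto
  next
    fix x :: 'x and f :: "'x bf"
    assume "x \<notin> dep f"
    then have "\<rho> (crit (piv x f) (-{x}) u) = 0" for u using crit_empty[of "piv x f"] piv_nodep ri by metis
    then show "MB \<rho> x f = 0" by (rule MB_const)
  next
    fix x :: 'x
    have "\<rho> (crit (piv x (var x)) (-{x}) u) = 1" for u using crit_zero[of "piv x (var x)"] piv_var(1) r0 by metis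
    then show "MB \<rho> x (var x) = 1" by (rule MB_const)
    have "\<rho> (crit (piv x (neg (var x))) (-{x}) u) = 1" for u using crit_zero[of "piv x (neg (var x))"] piv_var(2) r0 by metis
    then show "MB \<rho> x (neg (var x)) = 1" by (rule MB_const)
  next
    fix x :: 'x and \<sigma> :: "'x \<Rightarrow> 'x" and f :: "'x bf" assume "bij \<sigma>"
    then show "MB \<rho> x f = MB \<rho> (\<sigma> x) (perm_bf \<sigma> f)" by (rule MB_perm)
  next
    fix x y :: 'x and f
    show "MB \<rho> x f = MB \<rho> x (flip_var f y)" by (rule MB_flip)
  next
    fix x :: 'x and f g h
    assume "mono_modular f g \<and> mono_modular h g \<and>
        (\<forall>u. gcof h g True u \<longrightarrow> gcof f g True u) \<and>
        (\<forall>u. gcof f g False u \<longrightarrow> gcof h g False u) \<and> x \<in> dep g"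
    then show "MB \<rho> x h \<le> MB \<rho> x f" using MB_ModEC[OF sf] by blast
  qed
  show "unbiased (MB \<rho> :: 'x value_fun)"
    unfolding unbiased_def MB_crit piv_neg by simp
  show "derivative_dependent (MB \<rho> :: 'x value_fun)"
    unfolding derivative_dependent_def
  proof (intro allI impI)
    fix f g :: "'x bf" and x
    assume "\<forall>u. bderiv x g u \<longrightarrow> bderiv x f u"
    then show "MB \<rho> x g \<le> MB \<rho> x f" by (intro MB_mono[OF sf]) (simp add: piv_bderiv)
  qed
  assume "\<exists>lam::real. 0 \<le> lam \<and> lam < 1 \<and> (\<forall>k::nat. k \<ge> 1 \<longrightarrow> \<rho> (enat k) = lam ^ k)"
  then obtain lam :: real where lk: "\<forall>k::nat. k \<ge> 1 \<longrightarrow> \<rho> (enat k) = lam ^ k" by blast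
  have rk: "\<forall>k. \<rho> (enat k) = lam ^ k"
  proof
    fix k :: nat show "\<rho> (enat k) = lam ^ k"
      using lk r0 by (cases "k = 0") (simp_all add: zero_enat_def[symmetric])
  qed
  show "chain_rule_decomposable (MB \<rho> :: 'x value_fun)"
    unfolding chain_rule_decomposable_def using MB_chain[OF ri rk] by blast
qed


end
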